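(* Let $T:F\to E$ be a positive linear operator between Archimedean vector lattices, and assume that $F$ or $E$ has the $\sigma$-property. If $H$ is a sublattice of $F$ such that $T|_{H}$ is $\sigma$-order continuous, then $T|_{\overline{H}^{1}}$ and $T|_{\overline{H}}$ are $\sigma$-order continuous, where $\overline{H}^1$ and $\overline H$ are the adherence and the closure of $H$ with respect to the uniform convergence on $F$.
   Context: For $e\in F_+$, $F_e=\bigcup_{\lambda\ge0}\lambda[-e,e]$ with norm $\|f\|_e=\inf\{\lambda\ge0:|f|\le\lambda e\}$. A net $(f_\alpha)$ converges uniformly to $f$ if there is $e\in F_+$ with $f\in F_e$ and, for every $\varepsilon>0$, eventually $\|f_\alpha-f\|_e\le\varepsilon$ (in particular $f_\alpha\in F_e$). The (uniform) adherence $\overline{H}^1$ is the set of uniform limits of nets in $H$; a set is closed if it equals its adherence; $\overline H$ is the intersection of all closed sets containing $H$. A vector lattice has the $\sigma$-property if every countable subset is contained in a principal ideal $F_e$. For a sublattice $G\subset F$, $T|_G$ is $\sigma$-order continuous if for every sequence $(g_n)\subset G$ that is decreasing with infimum $0$ in $G$, the sequence $(Tg_n)$ decreases to $0_E$ (infimum $0$ in $E$). *)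

theory Defs
  imports Complex_Main "HOL-Library.Countable_Set"
begin

definition vabs :: "'a::{ordered_real_vector, lattice} \<Rightarrow> 'a" where
  "vabs f = sup f (- f)"

definition archimedean_vl :: "'a::{ordered_real_vector, lattice} itself \<Rightarrow> bool" where
  "archimedean_vl _ \<longleftrightarrow>
     (\<forall>x y :: 'a. 0 \<le> x \<longrightarrow> (\<forall>n::nat. real n *\<^sub>R x \<le> y) \<longrightarrow> x = 0)"

definition principal_ideal :: "'a::{ordered_real_vector, lattice} \<Rightarrow> 'a set" where
  "principal_ideal e = {f. \<exists>l::real. l \<ge> 0 \<and> vabs f \<le> l *\<^sub>R e}"

definition enorm :: "'a::{ordered_real_vector, lattice} \<Rightarrow> 'a \<Rightarrow> real" where
  "enorm e f = Inf {l::real. l \<ge> 0 \<and> vabs f \<le> l *\<^sub>R e}"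

definition sigma_property :: "'a::{ordered_real_vector, lattice} itself \<Rightarrow> bool" where
  "sigma_property _ \<longleftrightarrow>
     (\<forall>C :: 'a set. countable C \<longrightarrow> (\<exists>e\<ge>0. C \<subseteq> principal_ideal e))"

text \<open>Uniform convergence of a net, given as a function on an index type together
  with the filter of its tails (the "eventually" filter of the directed index set).\<close>
definition uniform_conv ::
  "('i \<Rightarrow> 'a::{ordered_real_vector, lattice}) \<Rightarrow> 'i filter \<Rightarrow> 'a \<Rightarrow> bool" where
  "uniform_conv x \<F> f \<longleftrightarrow>
     (\<exists>e\<ge>0. f \<in> principal_ideal e \<and>
        (\<forall>\<epsilon>>0. eventually (\<lambda>\<alpha>. x \<alpha> - f \<in> principal_ideal e \<and> enorm e (x \<alpha> - f) \<le> \<epsilon>) \<F>))"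

text \<open>Uniform adherence: limits of nets in H. A net is represented by its proper
  tail filter on the space itself (nets and proper filters give the same limits).\<close>
definition uadherence :: "'a::{ordered_real_vector, lattice} set \<Rightarrow> 'a set" where
  "uadherence H = {f. \<exists>\<F>::'a filter. \<F> \<noteq> bot \<and> eventually (\<lambda>g. g \<in> H) \<F> \<and> uniform_conv id \<F> f}"

definition uclosed :: "'a::{ordered_real_vector, lattice} set \<Rightarrow> bool" where
  "uclosed C \<longleftrightarrow> uadherence C = C"

definition uclosure :: "'a::{ordered_real_vector, lattice} set \<Rightarrow> 'a set" where
  "uclosure H = \<Inter>{C. H \<subseteq> C \<and> uclosed C}"

definition vector_sublattice :: "'a::{ordered_real_vector, lattice} set \<Rightarrow> bool" where
  "vector_sublattice G \<longleftrightarrow> 0 \<in> G \<and>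
     (\<forall>x\<in>G. \<forall>y\<in>G. x + y \<in> G \<and> sup x y \<in> G \<and> inf x y \<in> G) \<and>
     (\<forall>c::real. \<forall>x\<in>G. c *\<^sub>R x \<in> G)"

definition is_inf_in :: "'a::order set \<Rightarrow> 'a set \<Rightarrow> 'a \<Rightarrow> bool" where
  "is_inf_in G A x \<longleftrightarrow> x \<in> G \<and> (\<forall>a\<in>A. x \<le> a) \<and> (\<forall>y\<in>G. (\<forall>a\<in>A. y \<le> a) \<longrightarrow> y \<le> x)"

definition positive_op ::
  "('f::{ordered_real_vector, lattice} \<Rightarrow> 'e::{ordered_real_vector, lattice}) \<Rightarrow> bool" where
  "positive_op T \<longleftrightarrow> linear T \<and> (\<forall>x. 0 \<le> x \<longrightarrow> 0 \<le> T x)"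

definition sigma_oc_on ::
  "('f::{ordered_real_vector, lattice} \<Rightarrow> 'e::{ordered_real_vector, lattice}) \<Rightarrow> 'f set \<Rightarrow> bool" where
  "sigma_oc_on T G \<longleftrightarrow>
     (\<forall>g :: nat \<Rightarrow> 'f. (\<forall>n. g n \<in> G) \<longrightarrow> decseq g \<longrightarrow> is_inf_in G (range g) 0 \<longrightarrow>
        decseq (\<lambda>n. T (g n)) \<and> is_inf_in UNIV (range (\<lambda>n. T (g n))) 0)"

end

theory Submission
  imports Defs
begin

lemma pos_lin: "positive_op T \<Longrightarrow> linear T"
  by (simp add: positive_op_def)

lemma pos_mono:
  assumes "positive_op T" "x \<le> y" shows "T x \<le> T y"
proof -
  have "0 \<le> T (y - x)" using assms by (simp add: positive_op_def)
  moreover have "T (y - x) = T y - T x" using assms(1) by (simp add: positive_op_def linear_diff)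
  ultimately show ?thesis by simp
qed

lemma pos_id: "positive_op (id :: 'a::{ordered_real_vector,lattice} \<Rightarrow> 'a)"
  by (simp add: positive_op_def linear_id)

lemma arch_le:
  fixes z e :: "'a::{ordered_real_vector,lattice}"
  assumes A: "archimedean_vl TYPE('a)" and e: "0 \<le> e" and H: "\<And>d. d > 0 \<Longrightarrow> z \<le> d *\<^sub>R e"
  shows "z \<le> 0"
proof -
  let ?p = "sup z 0"
  have "real n *\<^sub>R ?p \<le> e" for n :: nat
  proof (cases "n = 0")
    case True then show ?thesis using e by simp
  next
    case False
    hence np: "real n > 0" by simp
    have "z \<le> (1 / real n) *\<^sub>R e" using H np by simp
    moreover have "0 \<le> (1 / real n) *\<^sub>R e" using e np by (simp add: scaleR_nonneg_nonneg)
    ultimately have "?p \<le> (1 / real n) *\<^sub>R e" by simp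
    hence "real n *\<^sub>R ?p \<le> real n *\<^sub>R ((1 / real n) *\<^sub>R e)"
      using scaleR_left_mono np by (metis less_eq_real_def)
    thus ?thesis using np by simp
  qed
  moreover have "0 \<le> ?p" by simp
  ultimately have "?p = 0" using A unfolding archimedean_vl_def by blast
  thus ?thesis by (metis sup_ge1)
qed

lemma geom_sum: "(\<Sum>j\<le>n. (1/2::real)^(j+1)) = 1 - (1/2)^(n+1)"
  by (induction n) auto

lemma geom_sum_le: "(\<Sum>j\<le>n. (1/2::real)^(j+s+1)) \<le> (1/2)^s"
proof -
  have "(\<Sum>j\<le>n. (1/2::real)^(j+s+1)) = (1/2)^s * (\<Sum>j\<le>n. (1/2::real)^(j+1))"
    by (simp add: sum_distrib_left power_add mult_ac)
  also have "\<dots> \<le> (1/2)^s" unfolding geom_sum by (simp add: mult_left_le)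
  finally show ?thesis .
qed

lemma small_pow: "(d::real) > 0 \<Longrightarrow> \<exists>s. (1/2::real)^s \<le> d"
  using real_arch_pow_inv[of d "1/2"] by (auto intro: less_imp_le)

definition approxs :: "'f::{ordered_real_vector,lattice} set \<Rightarrow> 'f \<Rightarrow> (nat \<Rightarrow> 'f) \<Rightarrow> (nat \<Rightarrow> 'f) \<Rightarrow> bool" where
  "approxs H f h w \<longleftrightarrow> (\<forall>k. h k \<in> H \<and> 0 \<le> w k \<and> f \<le> h k + w k \<and> h k \<le> f + w k)
     \<and> (\<forall>z. (\<forall>k. z \<le> w k) \<longrightarrow> z \<le> 0)"

definition bnd :: "('f::{ordered_real_vector,lattice} \<Rightarrow> 'x::{ordered_real_vector,lattice}) \<Rightarrow> (nat \<Rightarrow> 'f) \<Rightarrow> 'x \<Rightarrow> bool" where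
  "bnd p w v \<longleftrightarrow> (\<forall>n. \<exists>B. (\<forall>k\<le>n. w k \<le> B) \<and> p B \<le> v)"

definition good :: "('f::{ordered_real_vector,lattice} \<Rightarrow> 'x::{ordered_real_vector,lattice}) \<Rightarrow> 'f set \<Rightarrow> 'x \<Rightarrow> 'f \<Rightarrow> bool" where
  "good p H u f \<longleftrightarrow> (\<forall>\<epsilon>>0. \<exists>h w. approxs H f h w \<and> bnd p w (\<epsilon> *\<^sub>R u))"

lemma bnd_mono: "bnd p w v \<Longrightarrow> v \<le> v' \<Longrightarrow> bnd p w v'"
  unfolding bnd_def by (meson order_trans)

lemma good_mono_u:
  assumes g: "good p H u f" and le: "u \<le> c *\<^sub>R u'" and c: "0 < c"
  shows "good p H u' f"
  unfolding good_def
proof (intro allI impI)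
  fix \<epsilon> :: real assume e: "\<epsilon> > 0"
  hence "\<epsilon> / c > 0" using c by simp
  then obtain h w where hw: "approxs H f h w" "bnd p w ((\<epsilon> / c) *\<^sub>R u)"
    using g unfolding good_def by blast
  have "(\<epsilon> / c) *\<^sub>R u \<le> (\<epsilon> / c) *\<^sub>R (c *\<^sub>R u')"
    by (rule scaleR_left_mono[OF le]) (use e c in simp)
  also have "\<dots> = \<epsilon> *\<^sub>R u'" using c by simp
  finally show "\<exists>h w. approxs H f h w \<and> bnd p w (\<epsilon> *\<^sub>R u')" using hw bnd_mono by blast
qed

lemma good_id_T:
  assumes P: "positive_op T" and g: "good id H e f"
  shows "good T H (T e) f"
  unfolding good_def
proof (intro allI impI)
  fix \<epsilon> :: real assume e: "\<epsilon> > 0"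
  then obtain h w where hw: "approxs H f h w" "bnd id w (\<epsilon> *\<^sub>R e)"
    using g unfolding good_def by blast
  have "bnd T w (\<epsilon> *\<^sub>R T e)" unfolding bnd_def
  proof
    fix n
    obtain B where B: "\<forall>k\<le>n. w k \<le> B" "B \<le> \<epsilon> *\<^sub>R e" using hw(2) unfolding bnd_def by auto
    have "T B \<le> T (\<epsilon> *\<^sub>R e)" using pos_mono[OF P B(2)] .
    also have "\<dots> = \<epsilon> *\<^sub>R T e" using pos_lin[OF P] by (simp add: linear_scale)
    finally show "\<exists>B. (\<forall>k\<le>n. w k \<le> B) \<and> T B \<le> \<epsilon> *\<^sub>R T e" using B by blast
  qed
  thus "\<exists>h w. approxs H f h w \<and> bnd T w (\<epsilon> *\<^sub>R T e)" using hw(1) by blast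
qed

lemma good_base:
  assumes P: "positive_op p" and h: "f \<in> H"
  shows "good p H 0 f"
  unfolding good_def
proof (intro allI impI)
  fix \<epsilon> :: real assume e: "\<epsilon> > 0"
  have "p 0 = 0" using pos_lin[OF P] by (simp add: linear_0)
  hence "bnd p (\<lambda>k. 0) (\<epsilon> *\<^sub>R 0)" unfolding bnd_def by auto
  moreover have "approxs H f (\<lambda>k. f) (\<lambda>k. 0)" unfolding approxs_def using h by auto
  ultimately show "\<exists>h w. approxs H f h w \<and> bnd p w (\<epsilon> *\<^sub>R 0)" by blast
qed


lemma common:
  fixes g :: "nat \<Rightarrow> 'f::{ordered_real_vector,lattice}" and p :: "'f \<Rightarrow> 'x::{ordered_real_vector,lattice}"
  assumes S: "sigma_property TYPE('x)" and g: "\<forall>j. \<exists>u\<ge>0. good p H u (g j)"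
  shows "\<exists>u\<ge>0. \<forall>j. good p H u (g j)"
proof -
  from g have "\<forall>j. \<exists>u. 0 \<le> u \<and> good p H u (g j)" by blast
  then obtain U where U: "\<forall>j. 0 \<le> U j \<and> good p H (U j) (g j)" unfolding choice_iff by blast
  have "countable (range U)" by simp
  then obtain e :: 'x where e: "0 \<le> e" "range U \<subseteq> principal_ideal e"
    using S unfolding sigma_property_def by blast
  have "good p H e (g j)" for j
  proof -
    obtain l where l: "l \<ge> 0" "vabs (U j) \<le> l *\<^sub>R e" using e(2) unfolding principal_ideal_def by blast
    have "U j \<le> vabs (U j)" unfolding vabs_def by simp
    also have "\<dots> \<le> l *\<^sub>R e" by fact
    also have "\<dots> \<le> (l + 1) *\<^sub>R e" using e(1) by (simp add: scaleR_right_mono)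
    finally have "U j \<le> (l + 1) *\<^sub>R e" .
    moreover have "0 < l + 1" using l(1) by simp
    ultimately show ?thesis using good_mono_u U by blast
  qed
  thus ?thesis using e(1) by blast
qed


lemma approx:
  assumes f: "f \<in> uadherence S"
  shows "\<exists>e\<ge>0. \<forall>\<epsilon>>0. \<exists>x\<in>S. f \<le> x + \<epsilon> *\<^sub>R e \<and> x \<le> f + \<epsilon> *\<^sub>R e"
proof -
  obtain F where F: "F \<noteq> bot" "eventually (\<lambda>g. g \<in> S) F" "uniform_conv id F f"
    using f unfolding uadherence_def by blast
  then obtain e where e: "0 \<le> e" "\<forall>\<epsilon>>0. eventually (\<lambda>a. a - f \<in> principal_ideal e \<and> enorm e (a - f) \<le> \<epsilon>) F"
    unfolding uniform_conv_def by auto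
  have "\<exists>x\<in>S. f \<le> x + \<epsilon> *\<^sub>R e \<and> x \<le> f + \<epsilon> *\<^sub>R e" if ep: "\<epsilon> > 0" for \<epsilon>
  proof -
    have "eventually (\<lambda>a. a \<in> S \<and> (a - f \<in> principal_ideal e \<and> enorm e (a - f) \<le> \<epsilon>/2)) F"
      using eventually_conj[OF F(2) e(2)[rule_format, of "\<epsilon>/2"]] ep by simp
    then obtain x where x: "x \<in> S" "x - f \<in> principal_ideal e" "enorm e (x - f) \<le> \<epsilon>/2"
      using eventually_happens'[OF F(1)] by blast
    let ?L = "{l::real. l \<ge> 0 \<and> vabs (x - f) \<le> l *\<^sub>R e}"
    have ne: "?L \<noteq> {}" using x(2) unfolding principal_ideal_def by blast
    have "Inf ?L < \<epsilon>" using x(3) ep unfolding enorm_def by simp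
    then obtain l where l: "l \<in> ?L" "l < \<epsilon>" using cInf_lessD[OF ne] by blast
    have l1: "vabs (x - f) \<le> l *\<^sub>R e" using l(1) by simp
    have l2: "l *\<^sub>R e \<le> \<epsilon> *\<^sub>R e" using l(2) e(1) by (intro scaleR_right_mono) simp_all
    have v: "vabs (x - f) \<le> \<epsilon> *\<^sub>R e" using l1 l2 by (rule order_trans)
    have a: "x - f \<le> \<epsilon> *\<^sub>R e" using v unfolding vabs_def by (rule le_supE)
    have b: "f - x \<le> \<epsilon> *\<^sub>R e" using v unfolding vabs_def minus_diff_eq by (rule le_supE)
    have "f \<le> x + \<epsilon> *\<^sub>R e" using b by (simp add: diff_le_eq add.commute)
    moreover have "x \<le> f + \<epsilon> *\<^sub>R e" using a by (simp add: diff_le_eq add.commute)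
    ultimately have "f \<le> x + \<epsilon> *\<^sub>R e \<and> x \<le> f + \<epsilon> *\<^sub>R e" by blast
    thus ?thesis using x(1) by blast
  qed
  thus ?thesis using e(1) by blast
qed


lemma vabs_nonneg: "0 \<le> vabs (f::'a::{ordered_real_vector,lattice})"
proof -
  have "f + - f \<le> vabs f + vabs f" unfolding vabs_def by (intro add_mono) auto
  hence "0 \<le> (2::real) *\<^sub>R vabs f" by (simp add: scaleR_2)
  hence "(1/2::real) *\<^sub>R 0 \<le> (1/2::real) *\<^sub>R ((2::real) *\<^sub>R vabs f)" by (rule scaleR_left_mono) simp
  thus ?thesis by simp
qed

lemma sub_adh: "S \<subseteq> uadherence S"
proof
  fix f assume f: "f \<in> S"
  let ?e = "vabs f"
  have e0: "0 \<le> ?e" by (rule vabs_nonneg)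
  have v0: "vabs (0::'a) = 0" unfolding vabs_def by simp
  have fe: "f \<in> principal_ideal ?e" unfolding principal_ideal_def by (intro CollectI exI[of _ 1]) simp
  have en: "enorm ?e 0 \<le> 0" unfolding enorm_def
    by (rule cInf_lower) (auto simp: v0 bdd_below_def)
  have "uniform_conv id (principal {f}) f"
    unfolding uniform_conv_def eventually_principal
  proof (intro exI[of _ ?e] conjI e0 fe allI impI ballI)
    fix \<epsilon> :: real and a assume "\<epsilon> > 0" "a \<in> {f}"
    thus "id a - f \<in> principal_ideal ?e" "enorm ?e (id a - f) \<le> \<epsilon>"
      using en unfolding principal_ideal_def by (auto simp: v0)
  qed
  moreover have "principal {f} \<noteq> bot" by (simp add: principal_eq_bot_iff)
  moreover have "eventually (\<lambda>g. g \<in> S) (principal {f})" using f by (simp add: eventually_principal)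
  ultimately show "f \<in> uadherence S" unfolding uadherence_def by blast
qed

lemma adh_mono: "S \<subseteq> S' \<Longrightarrow> uadherence S \<subseteq> uadherence S'"
  unfolding uadherence_def by (auto elim!: eventually_mono)

lemma closed_sub: "H \<subseteq> C \<Longrightarrow> uadherence C \<subseteq> C \<Longrightarrow> uclosure H \<subseteq> C"
  unfolding uclosure_def uclosed_def using sub_adh by blast

lemma adh_sub_closure: "uadherence H \<subseteq> uclosure H"
proof
  fix f assume f: "f \<in> uadherence H"
  show "f \<in> uclosure H" unfolding uclosure_def
  proof
    fix C assume "C \<in> {C. H \<subseteq> C \<and> uclosed C}"
    hence "H \<subseteq> C" "uadherence C = C" unfolding uclosed_def by auto
    thus "f \<in> C" using adh_mono f by blast
  qed
qed

lemma H_sub_closure: "H \<subseteq> uclosure H"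
  unfolding uclosure_def by blast

primrec finf :: "(nat \<Rightarrow> 'a::semilattice_inf) \<Rightarrow> nat \<Rightarrow> 'a" where
  "finf a 0 = a 0"
| "finf a (Suc n) = inf (finf a n) (a (Suc n))"

lemma finf_le: "k \<le> n \<Longrightarrow> finf a n \<le> a k"
proof (induction n)
  case 0 thus ?case by simp
next
  case (Suc n) thus ?case by (cases "k = Suc n") (auto intro: le_infI1)
qed

lemma le_finf: "(\<And>k. k \<le> n \<Longrightarrow> x \<le> a k) \<Longrightarrow> x \<le> finf a n"
  by (induction n) auto

lemma finf_in: "vector_sublattice H \<Longrightarrow> (\<And>k. a k \<in> H) \<Longrightarrow> finf a n \<in> H"
  by (induction n) (auto simp: vector_sublattice_def)

lemma closed_good:
  fixes p :: "'f::{ordered_real_vector,lattice} \<Rightarrow> 'x::{ordered_real_vector,lattice}"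
  assumes AF: "archimedean_vl TYPE('f)" and SX: "sigma_property TYPE('x)" and P: "positive_op p"
    and f: "f \<in> uadherence {f. \<exists>u\<ge>0. good p H u f}"
  shows "\<exists>u\<ge>0. good p H u f"
proof -
  have L: "linear p" using pos_lin[OF P] .
  obtain e where e0: "0 \<le> e" and ap: "\<forall>\<epsilon>>0. \<exists>x\<in>{f. \<exists>u\<ge>0. good p H u f}. f \<le> x + \<epsilon> *\<^sub>R e \<and> x \<le> f + \<epsilon> *\<^sub>R e"
    using approx[OF f] by blast
  have ap': "\<exists>y. (\<exists>u\<ge>0. good p H u y) \<and> f \<le> y + \<epsilon> *\<^sub>R e \<and> y \<le> f + \<epsilon> *\<^sub>R e" if ep: "\<epsilon> > 0" for \<epsilon>
  proof -
    obtain y where y: "y \<in> {f. \<exists>u\<ge>0. good p H u f}" "f \<le> y + \<epsilon> *\<^sub>R e \<and> y \<le> f + \<epsilon> *\<^sub>R e"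
      using ap[rule_format, OF ep] by (elim bexE) 
    from y(1) have "\<exists>u\<ge>0. good p H u y" by (rule CollectD)
    with y(2) show ?thesis by (intro exI[of _ y]) (elim conjE; intro conjI)
  qed
  have "\<forall>i::nat. \<exists>y. (\<exists>u\<ge>0. good p H u y) \<and> f \<le> y + (1/2::real)^i *\<^sub>R e \<and> y \<le> f + (1/2::real)^i *\<^sub>R e"
  proof
    fix i :: nat
    have "(1/2::real)^i > 0" by simp
    thus "\<exists>y. (\<exists>u\<ge>0. good p H u y) \<and> f \<le> y + (1/2::real)^i *\<^sub>R e \<and> y \<le> f + (1/2::real)^i *\<^sub>R e"
      by (rule ap')
  qed
  then obtain x where x: "\<forall>i. (\<exists>u\<ge>0. good p H u (x i)) \<and> f \<le> x i + (1/2::real)^i *\<^sub>R e \<and> x i \<le> f + (1/2::real)^i *\<^sub>R e"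
    by (subst (asm) choice_iff) (elim exE)
  have "\<forall>j. \<exists>u\<ge>0. good p H u (x j)"
  proof
    fix j show "\<exists>u\<ge>0. good p H u (x j)" using x[rule_format, of j] by (elim conjE)
  qed
  then obtain u1 where u1: "0 \<le> u1" "\<forall>i. good p H u1 (x i)" using common[OF SX] by blast
  define U where "U = u1 + p e"
  have pe0: "0 \<le> p e" using P e0 unfolding positive_op_def by blast
  have U0: "0 \<le> U" unfolding U_def using u1(1) pe0 by simp
  have peU: "p e \<le> U" unfolding U_def using u1(1) by simp
  have gU: "good p H U (x i)" for i
  proof (rule good_mono_u[OF u1(2)[rule_format, of i]])
    show "u1 \<le> 1 *\<^sub>R U" unfolding U_def using pe0 by simp
  qed simp
  have "good p H U f" unfolding good_def
  proof (intro allI impI)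
    fix \<epsilon> :: real assume ep: "\<epsilon> > 0"
    obtain s where s: "(1/2::real)^s \<le> \<epsilon>/2" using small_pow[of "\<epsilon>/2"] ep by auto
    define \<epsilon>' where "\<epsilon>' i = (\<epsilon>/2) * (1/2::real)^(i+1)" for i :: nat
    have \<epsilon>'0: "\<epsilon>' i > 0" for i using ep unfolding \<epsilon>'_def by simp
    have "\<forall>i. \<exists>hw. approxs H (x (i+s+1)) (fst hw) (snd hw) \<and> bnd p (snd hw) (\<epsilon>' i *\<^sub>R U)"
    proof
      fix i
      obtain h w where "approxs H (x (i+s+1)) h w \<and> bnd p w (\<epsilon>' i *\<^sub>R U)"
        using gU[of "i+s+1"] \<epsilon>'0[of i] unfolding good_def by blast
      thus "\<exists>hw. approxs H (x (i+s+1)) (fst hw) (snd hw) \<and> bnd p (snd hw) (\<epsilon>' i *\<^sub>R U)"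
        by (intro exI[of _ "(h,w)"]) simp
    qed
    then obtain hw where hw: "\<And>i. approxs H (x (i+s+1)) (fst (hw i)) (snd (hw i))"
       "\<And>i. bnd p (snd (hw i)) (\<epsilon>' i *\<^sub>R U)"
      unfolding choice_iff by blast
    define hx where "hx i = fst (hw i)" for i
    define wx where "wx i = snd (hw i)" for i
    have ax: "hx i k \<in> H \<and> 0 \<le> wx i k \<and> x (i+s+1) \<le> hx i k + wx i k \<and> hx i k \<le> x (i+s+1) + wx i k" for i k
    proof -
      have "approxs H (x (i+s+1)) (hx i) (wx i)" using hw(1) unfolding hx_def wx_def .
      hence "\<forall>k. hx i k \<in> H \<and> 0 \<le> wx i k \<and> x (i+s+1) \<le> hx i k + wx i k \<and> hx i k \<le> x (i+s+1) + wx i k"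
        unfolding approxs_def by (rule conjunct1)
      thus ?thesis by (rule spec)
    qed
    have on: "z \<le> 0" if "\<forall>k. z \<le> wx i k" for i z
    proof -
      have "approxs H (x (i+s+1)) (hx i) (wx i)" using hw(1) unfolding hx_def wx_def .
      hence "\<forall>z. (\<forall>k. z \<le> wx i k) \<longrightarrow> z \<le> 0"
        unfolding approxs_def by (rule conjunct2)
      thus ?thesis using that by blast
    qed
    have bx: "\<exists>B. (\<forall>k\<le>n. wx i k \<le> B) \<and> p B \<le> \<epsilon>' i *\<^sub>R U" for i n
      using hw(2)[of i] unfolding bnd_def wx_def by (rule spec)
    define a where "a i = (1/2::real)^(i+s+1)" for i
    have a0: "a i \<ge> 0" for i unfolding a_def by simp
    define h' where "h' t = hx (fst (prod_decode t)) (snd (prod_decode t))" for t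
    define w' where "w' t = a (fst (prod_decode t)) *\<^sub>R e + wx (fst (prod_decode t)) (snd (prod_decode t))" for t
    have xi0: "f \<le> x (i+s+1) + a i *\<^sub>R e \<and> x (i+s+1) \<le> f + a i *\<^sub>R e" for i
      using x[rule_format, of "i+s+1"] unfolding a_def by (rule conjunct2)
    have xi: "f \<le> x (i+s+1) + a i *\<^sub>R e" "x (i+s+1) \<le> f + a i *\<^sub>R e" for i
      using xi0[of i] by (rule conjunct1, rule conjunct2)
    have A: "approxs H f h' w'"
      unfolding approxs_def
    proof (intro conjI allI impI)
      fix t
      obtain i k where ik: "prod_decode t = (i,k)" by (cases "prod_decode t")
      have h't: "h' t = hx i k" and w't: "w' t = a i *\<^sub>R e + wx i k" unfolding h'_def w'_def ik by simp_all
      show "h' t \<in> H" using ax h't by simp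
      have "0 \<le> a i *\<^sub>R e" using a0[of i] e0 by (simp add: scaleR_nonneg_nonneg)
      thus "0 \<le> w' t" using ax[of i k] w't by simp
      show "f \<le> h' t + w' t"
      proof -
        have "f \<le> x (i+s+1) + a i *\<^sub>R e" by (rule xi)
        also have "\<dots> \<le> (hx i k + wx i k) + a i *\<^sub>R e" using ax[of i k] by (simp add: add_right_mono)
        also have "\<dots> = h' t + w' t" using h't w't by (simp add: add_ac)
        finally show ?thesis .
      qed
      show "h' t \<le> f + w' t"
      proof -
        have "hx i k \<le> x (i+s+1) + wx i k" using ax by blast
        also have "\<dots> \<le> (f + a i *\<^sub>R e) + wx i k" using xi(2)[of i] by (rule add_right_mono)
        also have "\<dots> = f + w' t" using w't by (simp add: add_ac)
        finally show ?thesis using h't by simp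
      qed
    next
      fix z assume z: "\<forall>t. z \<le> w' t"
      have zi: "z \<le> a i *\<^sub>R e" for i
      proof -
        have "\<forall>k. z - a i *\<^sub>R e \<le> wx i k"
        proof
          fix k
          have "z \<le> w' (prod_encode (i,k))" using z by blast
          hence "z \<le> a i *\<^sub>R e + wx i k" unfolding w'_def by simp
          thus "z - a i *\<^sub>R e \<le> wx i k" by (simp add: diff_le_eq add.commute)
        qed
        hence "z - a i *\<^sub>R e \<le> 0" by (rule on)
        thus ?thesis by simp
      qed
      show "z \<le> 0"
      proof (rule arch_le[OF AF e0])
        fix d :: real assume d: "d > 0"
        obtain r where r: "(1/2::real)^r \<le> d" using small_pow[OF d] by blast
        have "a r \<le> (1/2)^r" unfolding a_def by (rule power_decreasing) simp_all
        hence "a r \<le> d" using r by linarith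
        hence "a r *\<^sub>R e \<le> d *\<^sub>R e" using e0 by (rule scaleR_right_mono)
        thus "z \<le> d *\<^sub>R e" using zi[of r] by (meson order_trans)
      qed
    qed
    have Bd: "bnd p w' (\<epsilon> *\<^sub>R U)" unfolding bnd_def
    proof
      fix n
      have "\<forall>i. \<exists>B. (\<forall>k\<le>n. wx i k \<le> B) \<and> p B \<le> \<epsilon>' i *\<^sub>R U" using bx by (intro allI)
      then obtain Bx where Bx0: "\<forall>i. (\<forall>k\<le>n. wx i k \<le> Bx i) \<and> p (Bx i) \<le> \<epsilon>' i *\<^sub>R U"
        by (subst (asm) choice_iff) (elim exE)
      have Bx: "(\<forall>k\<le>n. wx i k \<le> Bx i) \<and> p (Bx i) \<le> \<epsilon>' i *\<^sub>R U" for i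
        using Bx0 by (rule spec)
      define BB where "BB = (\<Sum>i\<le>n. a i *\<^sub>R e + Bx i)"
      have nn: "0 \<le> a i *\<^sub>R e + Bx i" for i
      proof -
        have c1: "0 \<le> wx i 0" using ax[of i 0] by blast
        have c2: "wx i 0 \<le> Bx i" using Bx[of i] by simp
        have c3: "0 \<le> Bx i" using c1 c2 by (rule order_trans)
        have c4: "0 \<le> a i *\<^sub>R e" using a0[of i] e0 by (rule scaleR_nonneg_nonneg)
        show ?thesis using c4 c3 by (rule add_nonneg_nonneg)
      qed
      have "\<forall>t\<le>n. w' t \<le> BB"
      proof (intro allI impI)
        fix t assume t: "t \<le> n"
        obtain i k where ik: "prod_decode t = (i,k)" by (cases "prod_decode t")
        have "prod_encode (prod_decode t) = t" by (rule prod_decode_inverse)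
        hence te: "prod_encode (i,k) = t" using ik by simp
        have "i \<le> prod_encode (i,k)" by (rule le_prod_encode_1)
        hence i: "i \<le> n" using t te by linarith
        have "k \<le> prod_encode (i,k)" by (rule le_prod_encode_2)
        hence k: "k \<le> n" using t te by linarith
        have "w' t = a i *\<^sub>R e + wx i k" unfolding w'_def ik by simp
        also have "\<dots> \<le> a i *\<^sub>R e + Bx i" using Bx[of i] k by (simp add: add_left_mono)
        also have "\<dots> \<le> BB" unfolding BB_def by (rule sum_nonneg_leq_bound[OF _ _ refl]) (use i nn in auto)
        finally show "w' t \<le> BB" .
      qed
      moreover have "p BB \<le> \<epsilon> *\<^sub>R U"
      proof -
        have "p BB = (\<Sum>i\<le>n. p (a i *\<^sub>R e + Bx i))" unfolding BB_def by (rule linear_sum[OF L])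
        also have "\<dots> = (\<Sum>i\<le>n. a i *\<^sub>R p e + p (Bx i))" by (simp add: linear_add[OF L] linear_scale[OF L])
        also have "\<dots> \<le> (\<Sum>i\<le>n. a i *\<^sub>R U + \<epsilon>' i *\<^sub>R U)"
        proof (intro sum_mono add_mono)
          fix i
          show "a i *\<^sub>R p e \<le> a i *\<^sub>R U" using peU a0[of i] by (rule scaleR_left_mono)
          show "p (Bx i) \<le> \<epsilon>' i *\<^sub>R U" using Bx[of i] by blast
        qed
        also have "\<dots> = (\<Sum>i\<le>n. (a i + \<epsilon>' i) *\<^sub>R U)" by (simp add: scaleR_add_left)
        also have "\<dots> = (\<Sum>i\<le>n. a i + \<epsilon>' i) *\<^sub>R U" by (rule scaleR_sum_left[symmetric])
        also have "\<dots> = ((\<Sum>i\<le>n. a i) + (\<Sum>i\<le>n. \<epsilon>' i)) *\<^sub>R U" by (simp add: sum.distrib)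
        also have "\<dots> \<le> \<epsilon> *\<^sub>R U"
        proof (rule scaleR_right_mono[OF _ U0])
          have s1: "(\<Sum>i\<le>n. a i) \<le> (1/2)^s" unfolding a_def by (rule geom_sum_le)
          have s2: "(\<Sum>i\<le>n. \<epsilon>' i) = (\<epsilon>/2) * (\<Sum>i\<le>n. (1/2::real)^(i+0+1))"
            unfolding \<epsilon>'_def by (simp add: sum_distrib_left)
          have s3: "(\<Sum>i\<le>n. (1/2::real)^(i+0+1)) \<le> (1/2)^0" by (rule geom_sum_le)
          have "(\<epsilon>/2) * (\<Sum>i\<le>n. (1/2::real)^(i+0+1)) \<le> \<epsilon>/2"
            using s3 ep by (intro mult_left_le) simp_all
          thus "(\<Sum>i\<le>n. a i) + (\<Sum>i\<le>n. \<epsilon>' i) \<le> \<epsilon>" using s1 s2 s by linarith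
        qed
        finally show ?thesis .
      qed
      ultimately show "\<exists>B. (\<forall>k\<le>n. w' k \<le> B) \<and> p B \<le> \<epsilon> *\<^sub>R U" by blast
    qed
    show "\<exists>h w. approxs H f h w \<and> bnd p w (\<epsilon> *\<^sub>R U)" using A Bd by blast
  qed
  thus ?thesis using U0 by blast
qed

lemma main:
  fixes T :: "'f::{ordered_real_vector,lattice} \<Rightarrow> 'e::{ordered_real_vector,lattice}"
  assumes AE: "archimedean_vl TYPE('e)" and P: "positive_op T" and HS: "vector_sublattice H"
    and oc: "sigma_oc_on T H" and HG: "H \<subseteq> G" and dec: "decseq g"
    and inf: "is_inf_in G (range g) 0" and u0: "0 \<le> u" and gu: "\<forall>j. good T H u (g j)"
  shows "decseq (\<lambda>n. T (g n)) \<and> is_inf_in UNIV (range (\<lambda>n. T (g n))) 0"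
proof -
  have L: "linear T" using pos_lin[OF P] .
  have g0: "0 \<le> g n" for n using inf unfolding is_inf_in_def by auto
  have glb: "y \<le> 0" if "y \<in> G" "\<forall>n. y \<le> g n" for y using inf that unfolding is_inf_in_def by auto
  have H0: "0 \<in> H" using HS unfolding vector_sublattice_def by blast
  have Hsup: "sup a b \<in> H" if "a \<in> H" "b \<in> H" for a b using HS that unfolding vector_sublattice_def by blast
  have gdec: "g n \<le> g m" if "m \<le> n" for m n using dec that unfolding decseq_def by blast
  have D: "decseq (\<lambda>n. T (g n))" unfolding decseq_def using gdec pos_mono[OF P] by blast
  have key: "x - (1/2::real)^m *\<^sub>R u \<le> 0" if xl: "\<forall>n. x \<le> T (g n)" for x m
  proof -
    have "\<forall>j. \<exists>hw. approxs H (g j) (fst hw) (snd hw) \<and> bnd T (snd hw) ((1/2::real)^(m+j+1) *\<^sub>R u)"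
    proof
      fix j
      have "(1/2::real)^(m+j+1) > 0" by simp
      then obtain h w where "approxs H (g j) h w \<and> bnd T w ((1/2::real)^(m+j+1) *\<^sub>R u)"
        using gu unfolding good_def by blast
      thus "\<exists>hw. approxs H (g j) (fst hw) (snd hw) \<and> bnd T (snd hw) ((1/2::real)^(m+j+1) *\<^sub>R u)"
        by (intro exI[of _ "(h,w)"]) simp
    qed
    then obtain hw where hw: "\<forall>j. approxs H (g j) (fst (hw j)) (snd (hw j)) \<and> bnd T (snd (hw j)) ((1/2::real)^(m+j+1) *\<^sub>R u)"
      by (subst (asm) choice_iff) (elim exE)
    define hh where "hh j = fst (hw j)" for j
    define ww where "ww j = snd (hw j)" for j
    have ap: "approxs H (g j) (hh j) (ww j)" for j
      using hw[rule_format, of j] unfolding hh_def ww_def by (rule conjunct1)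
    have bd: "bnd T (ww j) ((1/2::real)^(m+j+1) *\<^sub>R u)" for j
      using hw[rule_format, of j] unfolding hh_def ww_def by (rule conjunct2)
    have ax: "hh j k \<in> H \<and> 0 \<le> ww j k \<and> g j \<le> hh j k + ww j k \<and> hh j k \<le> g j + ww j k" for j k
    proof -
      have "\<forall>k. hh j k \<in> H \<and> 0 \<le> ww j k \<and> g j \<le> hh j k + ww j k \<and> hh j k \<le> g j + ww j k"
        using ap[of j] unfolding approxs_def by (rule conjunct1)
      thus ?thesis by (rule spec)
    qed
    have on: "z \<le> 0" if "\<forall>k. z \<le> ww j k" for j z
    proof -
      have "\<forall>z. (\<forall>k. z \<le> ww j k) \<longrightarrow> z \<le> 0"
        using ap[of j] unfolding approxs_def by (rule conjunct2)
      thus ?thesis using that by blast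
    qed
    define Qr where "Qr n = finf (\<lambda>j. finf (hh j) n) n" for n
    define Q where "Q n = sup (Qr n) 0" for n
    have QrH: "Qr n \<in> H" for n
      unfolding Qr_def
    proof (rule finf_in[OF HS])
      fix j show "finf (hh j) n \<in> H" by (rule finf_in[OF HS]) (use ax in blast)
    qed
    have QH: "Q n \<in> H" for n unfolding Q_def using QrH H0 by (rule Hsup)
    have Qr_le: "Qr n \<le> hh j k" if "j \<le> n" "k \<le> n" for n j k
    proof -
      have "Qr n \<le> finf (hh j) n" unfolding Qr_def using that(1) by (rule finf_le)
      also have "\<dots> \<le> hh j k" using that(2) by (rule finf_le)
      finally show ?thesis .
    qed
    have Qdec: "decseq Q"
    proof (rule decseq_SucI)
      fix n
      have "Qr (Suc n) \<le> Qr n" unfolding Qr_def[of n]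
      proof (rule le_finf)
        fix j assume j: "j \<le> n"
        show "Qr (Suc n) \<le> finf (hh j) n"
        proof (rule le_finf)
          fix k assume k: "k \<le> n"
          show "Qr (Suc n) \<le> hh j k" using j k by (intro Qr_le) simp_all
        qed
      qed
      thus "Q (Suc n) \<le> Q n" unfolding Q_def by (rule sup_mono) simp
    qed
    have Qinf: "is_inf_in H (range Q) 0"
      unfolding is_inf_in_def
    proof (intro conjI ballI impI)
      show "0 \<in> H" by (rule H0)
    next
      fix a assume "a \<in> range Q"
      then obtain n where "a = Q n" by blast
      thus "0 \<le> a" unfolding Q_def by simp
    next
      fix y assume yH: "y \<in> H" and yl: "\<forall>a\<in>range Q. y \<le> a"
      have yg: "y \<le> g j" for j
      proof -
        have "\<forall>k. y - g j \<le> ww j k"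
        proof
          fix k
          define n where "n = max j k"
          have "y \<le> Q n" using yl by simp
          also have "\<dots> \<le> g j + ww j k" unfolding Q_def
          proof (rule sup_least)
            have "Qr n \<le> hh j k" unfolding n_def by (rule Qr_le) simp_all
            also have "\<dots> \<le> g j + ww j k" using ax[of j k] by blast
            finally show "Qr n \<le> g j + ww j k" .
            show "0 \<le> g j + ww j k" using g0[of j] ax[of j k] by (simp add: add_nonneg_nonneg)
          qed
          finally show "y - g j \<le> ww j k" by (simp add: diff_le_eq add.commute)
        qed
        hence "y - g j \<le> 0" by (rule on)
        thus ?thesis by simp
      qed
      show "y \<le> 0" using HG yH yg by (intro glb) auto
    qed
    have ocQ: "is_inf_in UNIV (range (\<lambda>n. T (Q n))) 0"
      using oc QH Qdec Qinf unfolding sigma_oc_on_def by blast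
    have TQ: "x' \<le> 0" if "\<forall>n. x' \<le> T (Q n)" for x'
      using ocQ that unfolding is_inf_in_def by auto
    have "x - (1/2::real)^m *\<^sub>R u \<le> T (Q n)" for n
    proof -
      have "\<forall>j. \<exists>B. (\<forall>k\<le>n. ww j k \<le> B) \<and> T B \<le> (1/2::real)^(m+j+1) *\<^sub>R u"
      proof
        fix j show "\<exists>B. (\<forall>k\<le>n. ww j k \<le> B) \<and> T B \<le> (1/2::real)^(m+j+1) *\<^sub>R u"
          using bd[of j] unfolding bnd_def by (rule spec)
      qed
      then obtain Bj where Bj0: "\<forall>j. (\<forall>k\<le>n. ww j k \<le> Bj j) \<and> T (Bj j) \<le> (1/2::real)^(m+j+1) *\<^sub>R u"
        by (subst (asm) choice_iff) (elim exE)
      have Bj1: "ww j k \<le> Bj j" if "k \<le> n" for j k using Bj0 that by blast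
      have Bj2: "T (Bj j) \<le> (1/2::real)^(m+j+1) *\<^sub>R u" for j using Bj0 by blast
      have Bnn: "0 \<le> Bj j" for j
      proof -
        have "0 \<le> ww j 0" using ax[of j 0] by blast
        also have "\<dots> \<le> Bj j" by (rule Bj1) simp
        finally show ?thesis .
      qed
      define W where "W = (\<Sum>j\<le>n. Bj j)"
      have BW: "Bj j \<le> W" if "j \<le> n" for j
        unfolding W_def by (rule sum_nonneg_leq_bound[OF _ _ refl]) (use that Bnn in auto)
      have "g n - W \<le> Qr n" unfolding Qr_def
      proof (rule le_finf)
        fix j assume j: "j \<le> n"
        show "g n - W \<le> finf (hh j) n"
        proof (rule le_finf)
          fix k assume k: "k \<le> n"
          have "g n \<le> g j" using j by (rule gdec)
          also have "\<dots> \<le> hh j k + ww j k" using ax[of j k] by blast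
          also have "\<dots> \<le> hh j k + W"
          proof (rule add_left_mono)
            have "ww j k \<le> Bj j" using k by (rule Bj1)
            also have "\<dots> \<le> W" using j by (rule BW)
            finally show "ww j k \<le> W" .
          qed
          finally show "g n - W \<le> hh j k" by (simp add: diff_le_eq)
        qed
      qed
      hence "g n \<le> Q n + W" unfolding Q_def by (simp add: diff_le_eq) (meson order_trans sup_ge1 add_right_mono)
      hence "T (g n) \<le> T (Q n + W)" by (rule pos_mono[OF P])
      also have "\<dots> = T (Q n) + T W" by (rule linear_add[OF L])
      also have "T W \<le> (1/2::real)^m *\<^sub>R u"
      proof -
        have "T W = (\<Sum>j\<le>n. T (Bj j))" unfolding W_def by (rule linear_sum[OF L])
        also have "\<dots> \<le> (\<Sum>j\<le>n. (1/2::real)^(j+m+1) *\<^sub>R u)"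
        proof (rule sum_mono)
          fix j show "T (Bj j) \<le> (1/2::real)^(j+m+1) *\<^sub>R u" using Bj2[of j] by (simp add: add_ac)
        qed
        also have "\<dots> = (\<Sum>j\<le>n. (1/2::real)^(j+m+1)) *\<^sub>R u" by (rule scaleR_sum_left[symmetric])
        also have "\<dots> \<le> (1/2::real)^m *\<^sub>R u" using geom_sum_le u0 by (rule scaleR_right_mono)
        finally show ?thesis .
      qed
      hence "T (Q n) + T W \<le> T (Q n) + (1/2::real)^m *\<^sub>R u" by (rule add_left_mono)
      finally have "T (g n) \<le> T (Q n) + (1/2::real)^m *\<^sub>R u" .
      hence "x \<le> T (Q n) + (1/2::real)^m *\<^sub>R u" using xl by (meson order_trans)
      thus ?thesis by (simp add: diff_le_eq)
    qed
    thus ?thesis by (intro TQ allI)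
  qed
  have xle: "x \<le> 0" if xl: "\<forall>n. x \<le> T (g n)" for x
  proof (rule arch_le[OF AE u0])
    fix d :: real assume d: "d > 0"
    obtain m where m: "(1/2::real)^m \<le> d" using small_pow[OF d] by blast
    have "x \<le> (1/2::real)^m *\<^sub>R u" using key[OF xl, of m] by simp
    also have "\<dots> \<le> d *\<^sub>R u" using m u0 by (rule scaleR_right_mono)
    finally show "x \<le> d *\<^sub>R u" .
  qed
  have T0: "0 \<le> T (g n)" for n using P g0 unfolding positive_op_def by blast
  show ?thesis
  proof (intro conjI D)
    show "is_inf_in UNIV (range (\<lambda>n. T (g n))) 0"
      unfolding is_inf_in_def using T0 xle by auto
  qed
qed

theorem theorem10p3:
  fixes T :: "'f::{ordered_real_vector, lattice} \<Rightarrow> 'e::{ordered_real_vector, lattice}"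
    and H :: "'f set"
  assumes "archimedean_vl TYPE('f)" and "archimedean_vl TYPE('e)"
    and "sigma_property TYPE('f) \<or> sigma_property TYPE('e)"
    and "positive_op T"
    and "vector_sublattice H"
    and "sigma_oc_on T H"
  shows "sigma_oc_on T (uadherence H) \<and> sigma_oc_on T (uclosure H)"
proof -
  note AF = assms(1) and AE = assms(2) and S = assms(3) and P = assms(4) and HS = assms(5) and oc = assms(6)
  have common_u: "\<exists>u\<ge>0. \<forall>j. good T H u (g j)" if gc: "\<forall>j. g j \<in> uclosure H" for g :: "nat \<Rightarrow> 'f"
    using S
  proof
    assume SF: "sigma_property TYPE('f)"
    let ?C = "{f. \<exists>u\<ge>0. good id H u f}"
    have "uadherence ?C \<subseteq> ?C" using closed_good[OF AF SF pos_id] by blast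
    moreover have "H \<subseteq> ?C" using good_base[OF pos_id] by blast
    ultimately have "uclosure H \<subseteq> ?C" by (intro closed_sub)
    hence "\<forall>j. \<exists>u\<ge>0. good id H u (g j)" using gc by blast
    then obtain e where e: "0 \<le> e" "\<forall>j. good id H e (g j)" using common[OF SF] by blast
    have "0 \<le> T e" using P e(1) unfolding positive_op_def by blast
    moreover have "\<forall>j. good T H (T e) (g j)" using e(2) good_id_T[OF P] by blast
    ultimately show ?thesis by blast
  next
    assume SE: "sigma_property TYPE('e)"
    let ?C = "{f. \<exists>u\<ge>0. good T H u f}"
    have "uadherence ?C \<subseteq> ?C" using closed_good[OF AF SE P] by blast
    moreover have "H \<subseteq> ?C" using good_base[OF P] by blast
    ultimately have "uclosure H \<subseteq> ?C" by (intro closed_sub)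
    hence "\<forall>j. \<exists>u\<ge>0. good T H u (g j)" using gc by blast
    thus ?thesis using common[OF SE] by blast
  qed
  have GOOD: "sigma_oc_on T G" if HG: "H \<subseteq> G" and GC: "G \<subseteq> uclosure H" for G
    unfolding sigma_oc_on_def
  proof (intro allI impI)
    fix g :: "nat \<Rightarrow> 'f"
    assume gG: "\<forall>n. g n \<in> G" and dec: "decseq g" and inf: "is_inf_in G (range g) 0"
    have "\<forall>j. g j \<in> uclosure H" using gG GC by blast
    then obtain u where u: "0 \<le> u" "\<forall>j. good T H u (g j)" using common_u by blast
    show "decseq (\<lambda>n. T (g n)) \<and> is_inf_in UNIV (range (\<lambda>n. T (g n))) 0"
      by (rule main[OF AE P HS oc HG dec inf u(1) u(2)])
  qed
  show ?thesis
  proof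
    show "sigma_oc_on T (uadherence H)" using sub_adh adh_sub_closure by (intro GOOD)
    show "sigma_oc_on T (uclosure H)" using H_sub_closure by (intro GOOD) auto
  qed
qed

end
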